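(* Consider the TGSS iteration with data $y^\delta$, $\|y^\delta-y\|\le\delta$, $\delta>0$. Let $k\in\mathbb N_0$ with $\|r_k^\delta\|>\frac{1+\eta}{1-\eta}\delta$. Then $z_k^\delta\in H_>(u_k^\delta,\alpha_k^\delta+\xi_k^\delta)$. If moreover $z_i^\delta\in B_{4\rho}(x_0)$ for all $i\in I_k$ and $z\in B_{4\rho}(x_0)$ satisfies $F(z)=y$, then $u_k^\delta\ne0$, $x_{k+1}^\delta$ is well defined, and $$\|z-x_{k+1}^\delta\|^2\le\|z-z_k^\delta\|^2-\left(\frac{\|r_k^\delta\|\big(\|r_k^\delta\|-\delta-\eta(\|r_k^\delta\|+\delta)\big)}{\|u_k^\delta\|}\right)^2 .$$
   Context: Setting: $\mathcal X,\mathcal Y$ are real Hilbert spaces, $F:\mathcal D(F)\subset\mathcal X\to\mathcal Y$ is continuously Fréchet differentiable with derivative $F'(x)\in\mathcal L(\mathcal X,\mathcal Y)$ and Hilbert-space adjoint $F'(x)^*$; $x_0\in\mathcal X$ and $\rho>0$ satisfy $B_{4\rho}(x_0)\subset\mathcal D(F)$, where $B_r(x)$ is the closed ball of radius $r$ about $x$. Standing assumptions: (A1) $F(x)=y$ has a solution $x_*\in B_\rho(x_0)$; (A2) there is $\eta\in(0,1)$ with $\|F(x)-F(\tilde x)-F'(x)(x-\tilde x)\|\le\eta\|F(x)-F(\tilde x)\|$ for all $x,\tilde x\in B_{4\rho}(x_0)$; (A3) $0<\|F'(x)\|\le c_F$ for all $x\in B_{4\rho}(x_0)$. Data: $y^\delta\in\mathcal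 Y$ with $\|y^\delta-y\|\le\delta$, $\delta\ge0$ ($\delta=0$ means $y^\delta=y$). Notation: for $u\in\mathcal X$, $a\in\mathbb R$, $\xi\ge0$: $H(u,a)=\{x:\langle u,x\rangle=a\}$, $H_>(u,a)=\{x:\langle u,x\rangle>a\}$, $H(u,a,\xi)=\{x:|\langle u,x\rangle-a|\le\xi\}$. $P_C$ is the metric projection onto a nonempty closed convex set $C$. TGSS iteration (for data $y^\delta$, iterates carry superscript $\delta$): fix an integer $K\ge1$; set $x_{-1}^\delta=x_0^\delta=x_0$. For $k=0,1,2,\dots$: choose $\lambda_k^\delta\in[0,1]$ with $\lambda_0^\delta=0$, put $z_k^\delta=x_k^\delta+\lambda_k^\delta(x_k^\delta-x_{k-1}^\delta)$, $r_k^\delta=F(z_k^\delta)-y^\delta$, $u_k^\delta=F'(z_k^\delta)^*r_k^\delta$, $\alpha_k^\delta=\langle u_k^\delta,z_k^\delta\rangle-\|r_k^\delta\|^2$, $\xi_k^\delta=(\delta+\eta(\|r_k^\delta\|+\delta))\|r_k^\delta\|$, $H_k^\delta=H(u_k^\delta,\alpha_k^\delta,\xi_k^\delta)$. Choose a finite index set $I_k\subset\{k-K,\dots,k\}\cap\mathbb N_0$ with $k\in I_k$, written $I_k=\{k_1>\dots>k_s\}$, $k_1=k$; set $p_1=P_{H^\delta_{k_1}}(z_k^\delta)$, $p_j=P_{H^\delta_{k_1}\cap\dots\cap H^\delta_{k_j}}(p_{j-1})$ for $j=2,\dots,s$, and $x_{k+1}^\delta=p_s$. *)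

theory Defs
  imports "HOL-Analysis.Analysis"
begin

definition hyperplane :: "'a::real_inner \<Rightarrow> real \<Rightarrow> 'a set" where
  "hyperplane u a = {x. inner u x = a}"

definition halfspace_gt :: "'a::real_inner \<Rightarrow> real \<Rightarrow> 'a set" where
  "halfspace_gt u a = {x. inner u x > a}"

definition stripe :: "'a::real_inner \<Rightarrow> real \<Rightarrow> real \<Rightarrow> 'a set" where
  "stripe u a \<xi> = {x. \<bar>inner u x - a\<bar> \<le> \<xi>}"

text \<open>Metric projection onto a set C (the unique nearest point when C is nonempty,
  closed and convex in a Hilbert space).\<close>
definition is_metric_proj :: "'a::real_inner set \<Rightarrow> 'a \<Rightarrow> 'a \<Rightarrow> bool" where
  "is_metric_proj C a p \<longleftrightarrow> p \<in> C \<and> (\<forall>q\<in>C. dist a p \<le> dist a q)"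

definition metric_proj :: "'a::real_inner set \<Rightarrow> 'a \<Rightarrow> 'a" where
  "metric_proj C a = (SOME p. is_metric_proj C a p)"

text \<open>Quantities of the TGSS iteration. The sequence of iterates is indexed by nat;
  x_{-1} = x_0 is realised by the truncated subtraction k - 1 for k = 0.\<close>
definition tgss_z :: "(nat \<Rightarrow> 'a::real_vector) \<Rightarrow> (nat \<Rightarrow> real) \<Rightarrow> nat \<Rightarrow> 'a" where
  "tgss_z x lam k = x k + lam k *\<^sub>R (x k - x (k - 1))"

definition tgss_r :: "('a \<Rightarrow> 'b::real_normed_vector) \<Rightarrow> 'b \<Rightarrow> (nat \<Rightarrow> 'a::real_vector)
    \<Rightarrow> (nat \<Rightarrow> real) \<Rightarrow> nat \<Rightarrow> 'b" where
  "tgss_r F yd x lam k = F (tgss_z x lam k) - yd"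

text \<open>Fadj x is the Hilbert-space adjoint of F'(x).\<close>
definition tgss_u :: "('a \<Rightarrow> 'b \<Rightarrow> 'a) \<Rightarrow> ('a \<Rightarrow> 'b::real_normed_vector) \<Rightarrow> 'b
    \<Rightarrow> (nat \<Rightarrow> 'a::real_vector) \<Rightarrow> (nat \<Rightarrow> real) \<Rightarrow> nat \<Rightarrow> 'a" where
  "tgss_u Fadj F yd x lam k = Fadj (tgss_z x lam k) (tgss_r F yd x lam k)"

definition tgss_alpha :: "('a \<Rightarrow> 'b \<Rightarrow> 'a) \<Rightarrow> ('a \<Rightarrow> 'b::real_normed_vector) \<Rightarrow> 'b
    \<Rightarrow> (nat \<Rightarrow> 'a::real_inner) \<Rightarrow> (nat \<Rightarrow> real) \<Rightarrow> nat \<Rightarrow> real" where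
  "tgss_alpha Fadj F yd x lam k =
     inner (tgss_u Fadj F yd x lam k) (tgss_z x lam k) - (norm (tgss_r F yd x lam k))\<^sup>2"

definition tgss_xi :: "real \<Rightarrow> real \<Rightarrow> ('a \<Rightarrow> 'b::real_normed_vector) \<Rightarrow> 'b
    \<Rightarrow> (nat \<Rightarrow> 'a::real_vector) \<Rightarrow> (nat \<Rightarrow> real) \<Rightarrow> nat \<Rightarrow> real" where
  "tgss_xi \<delta> \<eta> F yd x lam k =
     (\<delta> + \<eta> * (norm (tgss_r F yd x lam k) + \<delta>)) * norm (tgss_r F yd x lam k)"

definition tgss_H :: "real \<Rightarrow> real \<Rightarrow> ('a \<Rightarrow> 'b \<Rightarrow> 'a) \<Rightarrow> ('a \<Rightarrow> 'b::real_normed_vector) \<Rightarrow> 'b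
    \<Rightarrow> (nat \<Rightarrow> 'a::real_inner) \<Rightarrow> (nat \<Rightarrow> real) \<Rightarrow> nat \<Rightarrow> 'a set" where
  "tgss_H \<delta> \<eta> Fadj F yd x lam k =
     stripe (tgss_u Fadj F yd x lam k) (tgss_alpha Fadj F yd x lam k) (tgss_xi \<delta> \<eta> F yd x lam k)"

text \<open>The stripes used in step k, listed in the order k_1 > k_2 > ... > k_s
  of the index set I_k.\<close>
definition tgss_stripes :: "real \<Rightarrow> real \<Rightarrow> ('a \<Rightarrow> 'b \<Rightarrow> 'a) \<Rightarrow> ('a \<Rightarrow> 'b::real_normed_vector)
    \<Rightarrow> 'b \<Rightarrow> (nat \<Rightarrow> 'a::real_inner) \<Rightarrow> (nat \<Rightarrow> real) \<Rightarrow> nat set \<Rightarrow> 'a set list" where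
  "tgss_stripes \<delta> \<eta> Fadj F yd x lam Ik =
     map (tgss_H \<delta> \<eta> Fadj F yd x lam) (rev (sorted_list_of_set Ik))"

fun pseq :: "'a::real_inner set list \<Rightarrow> 'a \<Rightarrow> nat \<Rightarrow> 'a" where
  "pseq Hs z 0 = z"
| "pseq Hs z (Suc j) = metric_proj (\<Inter>i\<le>j. Hs ! i) (pseq Hs z j)"

end

theory Submission
  imports Defs
begin


lemma proj_exists:
  fixes C :: "'a::{real_inner,complete_space} set"
  assumes cl: "closed C" and cv: "convex C" and ne: "C \<noteq> {}"
  shows "\<exists>p. is_metric_proj C a p"
proof -
  define d where "d = Inf (dist a ` C)"
  have bdd: "bdd_below (dist a ` C)" by (rule bdd_belowI[of _ 0]) auto
  have dle: "d \<le> dist a q" if "q \<in> C" for q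
    unfolding d_def using bdd that by (simp add: cInf_lower)
  have d0: "0 \<le> d" unfolding d_def using ne by (auto intro!: cInf_greatest)
  have "\<forall>n. \<exists>q\<in>C. dist a q < d + 1 / real (Suc n)"
  proof
    fix n
    have "Inf (dist a ` C) < d + 1 / real (Suc n)" unfolding d_def by simp
    from cInf_lessD[OF _ this] ne show "\<exists>q\<in>C. dist a q < d + 1 / real (Suc n)" by auto
  qed
  then obtain q where qC: "\<And>n. q n \<in> C" and qd: "\<And>n. dist a (q n) < d + 1 / real (Suc n)"
    by metis
  define c where "c = 8 * d + 4"
  have bound: "(norm (q n - q m))\<^sup>2 \<le> c / real (Suc N)" if "N \<le> n" "N \<le> m" for n m N
  proof -
    define e1 where "e1 = 1 / real (Suc n)"
    define e2 where "e2 = 1 / real (Suc m)"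
    define eN where "eN = 1 / real (Suc N)"
    have e1: "0 < e1" "e1 \<le> eN" "eN \<le> 1" unfolding e1_def eN_def using that
      by (auto simp: frac_le divide_le_eq)
    have e2: "0 < e2" "e2 \<le> eN" unfolding e2_def eN_def using that
      by (auto simp: frac_le)
    have mid: "(1/2) *\<^sub>R (q n + q m) \<in> C"
      using cv qC[of n] qC[of m] unfolding convex_def
      by (metis (no_types, lifting) add_divide_distrib field_sum_of_halves scaleR_add_right le_divide_eq_1_pos
          zero_le_divide_1_iff zero_less_numeral less_eq_real_def one_le_numeral)
    have pm: "(norm (q n - q m))\<^sup>2 = 2 * (norm (a - q n))\<^sup>2 + 2 * (norm (a - q m))\<^sup>2
                 - 4 * (norm (a - (1/2) *\<^sub>R (q n + q m)))\<^sup>2"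
      unfolding power2_norm_eq_inner
      by (simp add: inner_diff_left inner_diff_right inner_add_left inner_add_right inner_commute algebra_simps)
    have h1: "norm (a - q n) < d + e1" using qd[of n] unfolding e1_def dist_norm .
    have h2: "norm (a - q m) < d + e2" using qd[of m] unfolding e2_def dist_norm .
    have h3: "d \<le> norm (a - (1/2) *\<^sub>R (q n + q m))" using dle[OF mid] by (simp add: dist_norm)
    have s1: "(norm (a - q n))\<^sup>2 \<le> (d + e1)\<^sup>2" using h1 by (intro power_mono) auto
    have s2: "(norm (a - q m))\<^sup>2 \<le> (d + e2)\<^sup>2" using h2 by (intro power_mono) auto
    have s3: "d\<^sup>2 \<le> (norm (a - (1/2) *\<^sub>R (q n + q m)))\<^sup>2" using h3 d0 by (intro power_mono) auto
    have "(norm (q n - q m))\<^sup>2 \<le> 2 * (d + e1)\<^sup>2 + 2 * (d + e2)\<^sup>2 - 4 * d\<^sup>2"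
      using pm s1 s2 s3 by linarith
    also have "\<dots> = 4*d*e1 + 2*e1*e1 + 4*d*e2 + 2*e2*e2" by (simp add: power2_eq_square algebra_simps)
    also have "\<dots> \<le> 4*d*eN + 2*eN + 4*d*eN + 2*eN"
    proof -
      have "e1*e1 \<le> eN" using e1 by (metis less_eq_real_def mult_le_one order_trans mult_right_le_one_le)
      moreover have "e2*e2 \<le> eN" using e1 e2 by (metis less_eq_real_def mult_le_one order_trans mult_right_le_one_le)
      moreover have "d*e1 \<le> d*eN" "d*e2 \<le> d*eN" using d0 e1 e2 by (auto intro: mult_left_mono)
      ultimately show ?thesis by linarith
    qed
    also have "\<dots> = c * eN" by (simp add: c_def algebra_simps)
    also have "\<dots> = c / real (Suc N)" unfolding eN_def by simp
    finally show ?thesis .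
  qed
  have "Cauchy q"
  proof (rule CauchyI)
    fix e :: real assume e: "0 < e"
    obtain N :: nat where N: "c / e\<^sup>2 < real N" using reals_Archimedean2 by blast
    have "c / real (Suc N) < e\<^sup>2"
    proof -
      have "c < e\<^sup>2 * real N" using N e by (simp add: divide_less_eq mult.commute)
      also have "\<dots> \<le> e\<^sup>2 * real (Suc N)" using e by simp
      finally show ?thesis by (simp add: divide_less_eq)
    qed
    show "\<exists>M. \<forall>m\<ge>M. \<forall>n\<ge>M. norm (q m - q n) < e"
    proof (intro exI allI impI)
      fix m n assume "N \<le> m" "N \<le> n"
      then have "(norm (q m - q n))\<^sup>2 < e\<^sup>2" using bound[of N m n] \<open>c / real (Suc N) < e\<^sup>2\<close> by linarith
      then show "norm (q m - q n) < e" using e by (simp add: power_less_imp_less_base less_eq_real_def)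
    qed
  qed
  then obtain l where l: "q \<longlonglongrightarrow> l" using Cauchy_convergent convergent_def by blast
  have lC: "l \<in> C" using cl l qC closed_sequentially by blast
  have t1: "(\<lambda>n. dist a (q n)) \<longlonglongrightarrow> dist a l" using l by (intro tendsto_intros)
  have t2: "(\<lambda>n. d + 1 / real (Suc n)) \<longlonglongrightarrow> d + 0"
    by (intro tendsto_intros LIMSEQ_Suc[OF lim_inverse_n'[unfolded inverse_eq_divide]] )
  have "dist a l \<le> d + 0"
    by (rule LIMSEQ_le[OF t1 t2]) (use qd less_imp_le in blast)
  then have "\<forall>q'\<in>C. dist a l \<le> dist a q'" using dle by force
  then show ?thesis using lC unfolding is_metric_proj_def by blast
qed

lemma metric_proj_is:
  fixes C :: "'a::{real_inner,complete_space} set"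
  assumes "closed C" "convex C" "C \<noteq> {}"
  shows "is_metric_proj C a (metric_proj C a)"
  unfolding metric_proj_def using proj_exists[OF assms] by (rule someI_ex)

lemma proj_ineq:
  fixes C :: "'a::real_inner set"
  assumes P: "is_metric_proj C a p" and cv: "convex C" and qC: "q \<in> C"
  shows "(norm (q - p))\<^sup>2 + (norm (a - p))\<^sup>2 \<le> (norm (q - a))\<^sup>2"
proof -
  have pC: "p \<in> C" and min: "\<forall>w\<in>C. dist a p \<le> dist a w" using P unfolding is_metric_proj_def by auto
  have key: "2 * inner (a - p) (q - p) \<le> t * (norm (q - p))\<^sup>2" if t: "0 < t" "t \<le> 1" for t
  proof -
    have "p + t *\<^sub>R (q - p) \<in> C"
    proof -
      have "(1 - t) *\<^sub>R p + t *\<^sub>R q \<in> C" using cv pC qC t unfolding convex_def by auto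
      moreover have "(1 - t) *\<^sub>R p + t *\<^sub>R q = p + t *\<^sub>R (q - p)" by (simp add: algebra_simps)
      ultimately show ?thesis by simp
    qed
    then have "norm (a - p) \<le> norm (a - (p + t *\<^sub>R (q - p)))" using min by (auto simp: dist_norm)
    then have "(norm (a - p))\<^sup>2 \<le> (norm (a - (p + t *\<^sub>R (q - p))))\<^sup>2" by (intro power_mono) auto
    also have "\<dots> = (norm (a - p))\<^sup>2 - 2 * t * inner (a - p) (q - p) + t * t * (norm (q - p))\<^sup>2"
      unfolding power2_norm_eq_inner
      by (simp add: inner_diff_left inner_diff_right inner_add_left inner_add_right inner_commute algebra_simps)
    finally have "t * (2 * inner (a - p) (q - p)) \<le> t * (t * (norm (q - p))\<^sup>2)" by (simp add: algebra_simps)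
    then show ?thesis using t by simp
  qed
  have neg: "inner (a - p) (q - p) \<le> 0"
  proof (rule ccontr)
    assume v: "\<not> ?thesis"
    define v where "v = inner (a - p) (q - p)"
    have vp: "v > 0" using v v_def by simp
    have "q \<noteq> p" using vp v_def by auto
    then have n: "(norm (q - p))\<^sup>2 > 0" by simp
    define t where "t = min 1 (v / (norm (q - p))\<^sup>2)"
    have t: "0 < t" "t \<le> 1" using vp n by (auto simp: t_def)
    have "t * (norm (q - p))\<^sup>2 \<le> v / (norm (q - p))\<^sup>2 * (norm (q - p))\<^sup>2"
      unfolding t_def using n by (intro mult_right_mono) auto
    also have "\<dots> = v" using n by simp
    finally show False using key[OF t] vp v_def by linarith
  qed
  have "(norm (q - a))\<^sup>2 = (norm (q - p))\<^sup>2 - 2 * inner (a - p) (q - p) + (norm (a - p))\<^sup>2"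
    unfolding power2_norm_eq_inner
    by (simp add: inner_diff_left inner_diff_right inner_commute algebra_simps)
  then show ?thesis using neg by linarith
qed

lemma stripe_closed: "closed (stripe u a xi)"
  unfolding stripe_def by (intro closed_Collect_le continuous_intros)

lemma stripe_convex: "convex (stripe (u::'a::real_inner) a xi)"
proof -
  have "stripe u a xi = {x. inner u x \<le> a + xi} \<inter> {x. inner u x \<ge> a - xi}"
    unfolding stripe_def by auto
  then show ?thesis by (simp add: convex_Int convex_halfspace_le convex_halfspace_ge)
qed

lemma stripe_member:
  fixes F :: "'a::real_inner \<Rightarrow> 'b::real_inner"
  assumes adj: "\<forall>h w. inner (F' zi h) w = inner h (Fadj zi w)"
    and A2: "norm (F zi - F z - F' zi (zi - z)) \<le> \<eta> * norm (F zi - F z)"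
    and Fz: "F z = y" and data: "norm (yd - y) \<le> \<delta>" and eta: "0 \<le> \<eta>"
    and lin: "\<And>a b. F' zi (a - b) = F' zi a - F' zi b"
  shows "\<bar>inner (Fadj zi (F zi - yd)) z - (inner (Fadj zi (F zi - yd)) zi - (norm (F zi - yd))\<^sup>2)\<bar>
          \<le> (\<delta> + \<eta> * (norm (F zi - yd) + \<delta>)) * norm (F zi - yd)"
proof -
  define r where "r = F zi - yd"
  define e where "e = F zi - F z - F' zi (zi - z)"
  have "inner (Fadj zi r) z - (inner (Fadj zi r) zi - (norm r)\<^sup>2) = (norm r)\<^sup>2 - inner (Fadj zi r) (zi - z)"
    by (simp add: inner_diff_right)
  also have "inner (Fadj zi r) (zi - z) = inner (F' zi (zi - z)) r"
    using adj by (simp add: inner_commute)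
  also have "F' zi (zi - z) = r + (yd - y) - e" unfolding r_def e_def using Fz by simp
  also have "(norm r)\<^sup>2 - inner (r + (yd - y) - e) r = inner e r - inner (yd - y) r"
    by (simp add: inner_diff_left inner_add_left power2_norm_eq_inner)
  finally have eq: "inner (Fadj zi r) z - (inner (Fadj zi r) zi - (norm r)\<^sup>2) = inner e r - inner (yd - y) r" .
  have ne: "norm e \<le> \<eta> * (norm r + \<delta>)"
  proof -
    have "norm (F zi - F z) = norm (r + (yd - y))" unfolding r_def using Fz by simp
    also have "\<dots> \<le> norm r + \<delta>" using data norm_triangle_ineq[of r "yd - y"] by linarith
    finally show ?thesis using A2 eta unfolding e_def by (meson mult_left_mono order_trans)
  qed
  have "\<bar>inner e r - inner (yd - y) r\<bar> \<le> norm e * norm r + norm (yd - y) * norm r"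
    using Cauchy_Schwarz_ineq2[of e r] Cauchy_Schwarz_ineq2[of "yd - y" r] by linarith
  also have "\<dots> \<le> \<eta> * (norm r + \<delta>) * norm r + \<delta> * norm r"
    using ne data by (intro add_mono mult_right_mono) auto
  finally show ?thesis using eq unfolding r_def by (simp add: algebra_simps)
qed

theorem proposition3p6:
  fixes F :: "'a::{real_inner,complete_space} \<Rightarrow> 'b::{real_inner,complete_space}"
    and F' :: "'a \<Rightarrow> ('a \<Rightarrow>\<^sub>L 'b)"
    and Fadj :: "'a \<Rightarrow> 'b \<Rightarrow> 'a"
    and D :: "'a set"
    and x0 xstar z :: 'a and y yd :: 'b
    and \<rho> \<eta> cF \<delta> :: real
    and K k :: nat
    and lam :: "nat \<Rightarrow> real" and I :: "nat \<Rightarrow> nat set" and x :: "nat \<Rightarrow> 'a"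
  assumes rho_pos: "\<rho> > 0"
    and ball_dom: "cball x0 (4 * \<rho>) \<subseteq> D"
    and deriv: "\<forall>v\<in>D. (F has_derivative blinfun_apply (F' v)) (at v within D)"
    and deriv_cont: "continuous_on D F'"
    and adjoint: "\<forall>v\<in>D. \<forall>h w. inner (F' v h) w = inner h (Fadj v w)"
    and A1: "xstar \<in> cball x0 \<rho>" "F xstar = y"
    and eta: "0 < \<eta>" "\<eta> < 1"
    and A2: "\<forall>v\<in>cball x0 (4 * \<rho>). \<forall>w\<in>cball x0 (4 * \<rho>).
               norm (F v - F w - F' v (v - w)) \<le> \<eta> * norm (F v - F w)"
    and A3: "\<forall>v\<in>cball x0 (4 * \<rho>). 0 < norm (F' v) \<and> norm (F' v) \<le> cF"
    and delta_pos: "\<delta> > 0"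
    and data: "norm (yd - y) \<le> \<delta>"
    and K: "K \<ge> 1"
    and lam: "\<forall>j. 0 \<le> lam j \<and> lam j \<le> 1" "lam 0 = 0"
    and Iset: "\<forall>j. finite (I j) \<and> j \<in> I j \<and> I j \<subseteq> {j - K..j}"
    and x_init: "x 0 = x0"
    and x_step: "\<forall>j. x (Suc j) =
       pseq (tgss_stripes \<delta> \<eta> Fadj F yd x lam (I j)) (tgss_z x lam j) (card (I j))"
    and resid: "norm (tgss_r F yd x lam k) > (1 + \<eta>) / (1 - \<eta>) * \<delta>"
  shows "tgss_z x lam k \<in> halfspace_gt (tgss_u Fadj F yd x lam k)
            (tgss_alpha Fadj F yd x lam k + tgss_xi \<delta> \<eta> F yd x lam k)
       \<and> ((\<forall>i\<in>I k. tgss_z x lam i \<in> cball x0 (4 * \<rho>)) \<and> z \<in> cball x0 (4 * \<rho>) \<and> F z = y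
          \<longrightarrow> tgss_u Fadj F yd x lam k \<noteq> 0
            \<and> (\<forall>j < card (I k).
                 is_metric_proj (\<Inter>i\<le>j. tgss_stripes \<delta> \<eta> Fadj F yd x lam (I k) ! i)
                   (pseq (tgss_stripes \<delta> \<eta> Fadj F yd x lam (I k)) (tgss_z x lam k) j)
                   (pseq (tgss_stripes \<delta> \<eta> Fadj F yd x lam (I k)) (tgss_z x lam k) (Suc j)))
            \<and> (norm (z - x (Suc k)))\<^sup>2 \<le> (norm (z - tgss_z x lam k))\<^sup>2
                - (norm (tgss_r F yd x lam k) * (norm (tgss_r F yd x lam k) - \<delta>
                     - \<eta> * (norm (tgss_r F yd x lam k) + \<delta>)) / norm (tgss_u Fadj F yd x lam k))\<^sup>2)"
  proof -
  let ?zk = "tgss_z x lam k"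
  let ?r = "tgss_r F yd x lam k"
  let ?u = "tgss_u Fadj F yd x lam k"
  let ?al = "tgss_alpha Fadj F yd x lam k"
  let ?xi = "tgss_xi \<delta> \<eta> F yd x lam k"
  let ?Hs = "tgss_stripes \<delta> \<eta> Fadj F yd x lam (I k)"
  let ?p = "pseq ?Hs ?zk"
  have al: "?al = inner ?u ?zk - (norm ?r)\<^sup>2" by (simp add: tgss_alpha_def)
  have xi: "?xi = (\<delta> + \<eta> * (norm ?r + \<delta>)) * norm ?r" by (simp add: tgss_xi_def)
  have g: "(1 + \<eta>) * \<delta> < (1 - \<eta>) * norm ?r"
  proof -
    have "(1 + \<eta>) / (1 - \<eta>) * \<delta> * (1 - \<eta>) < norm ?r * (1 - \<eta>)"
      using resid eta by (intro mult_strict_right_mono) auto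
    moreover have "(1 + \<eta>) / (1 - \<eta>) * \<delta> * (1 - \<eta>) = (1 + \<eta>) * \<delta>" using eta by simp
    ultimately show ?thesis by (simp add: mult.commute)
  qed
  have nr: "norm ?r > 0"
  proof -
    have "(1 + \<eta>) * \<delta> > 0" using eta delta_pos by simp
    then have "(1 - \<eta>) * norm ?r > 0" using g by linarith
    then show ?thesis using eta by (simp add: zero_less_mult_iff)
  qed
  have dpos: "(norm ?r)\<^sup>2 - ?xi > 0"
  proof -
    have "(norm ?r)\<^sup>2 - ?xi = norm ?r * ((1 - \<eta>) * norm ?r - (1 + \<eta>) * \<delta>)"
      unfolding xi by (simp add: power2_eq_square algebra_simps)
    then show ?thesis using g nr by simp
  qed
  have eqd: "norm ?r * (norm ?r - \<delta> - \<eta> * (norm ?r + \<delta>)) = (norm ?r)\<^sup>2 - ?xi"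
    unfolding xi by (simp add: power2_eq_square algebra_simps)
  have part1: "?zk \<in> halfspace_gt ?u (?al + ?xi)"
    unfolding halfspace_gt_def using al dpos by simp
  have part2: "tgss_u Fadj F yd x lam k \<noteq> 0
            \<and> (\<forall>j < card (I k).
                 is_metric_proj (\<Inter>i\<le>j. ?Hs ! i) (?p j) (?p (Suc j)))
            \<and> (norm (z - x (Suc k)))\<^sup>2 \<le> (norm (z - ?zk))\<^sup>2
                - (norm ?r * (norm ?r - \<delta> - \<eta> * (norm ?r + \<delta>)) / norm ?u)\<^sup>2"
    if hyp: "\<forall>i\<in>I k. tgss_z x lam i \<in> cball x0 (4 * \<rho>)" "z \<in> cball x0 (4 * \<rho>)" "F z = y"
  proof -
    have zin: "z \<in> tgss_H \<delta> \<eta> Fadj F yd x lam m" if m: "m \<in> I k" for m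
    proof -
      have zm: "tgss_z x lam m \<in> cball x0 (4 * \<rho>)" using hyp m by auto
      have "\<bar>inner (Fadj (tgss_z x lam m) (F (tgss_z x lam m) - yd)) z
             - (inner (Fadj (tgss_z x lam m) (F (tgss_z x lam m) - yd)) (tgss_z x lam m)
                - (norm (F (tgss_z x lam m) - yd))\<^sup>2)\<bar>
          \<le> (\<delta> + \<eta> * (norm (F (tgss_z x lam m) - yd) + \<delta>)) * norm (F (tgss_z x lam m) - yd)"
        apply (rule stripe_member[where F' = "\<lambda>v. blinfun_apply (F' v)" and y = y])
        using adjoint zm ball_dom apply blast
        using A2 zm hyp apply blast
        using hyp apply simp
        using data apply simp
        using eta apply simp
        by (simp add: blinfun.diff_right)
      then show ?thesis
        unfolding tgss_H_def stripe_def tgss_alpha_def tgss_xi_def tgss_u_def tgss_r_def by simp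
    qed
    define xs where "xs = sorted_list_of_set (I k)"
    have fin: "finite (I k)" and kI: "k \<in> I k" and Isub: "I k \<subseteq> {k - K..k}" using Iset by auto
    have setxs: "set xs = I k" and sxs: "sorted xs" and lxs: "length xs = card (I k)"
      unfolding xs_def using fin by auto
    have Hs: "?Hs = map (tgss_H \<delta> \<eta> Fadj F yd x lam) (rev xs)"
      unfolding tgss_stripes_def xs_def by simp
    have lenHs: "length ?Hs = card (I k)" using Hs lxs by simp
    have cpos: "card (I k) > 0" using fin kI card_gt_0_iff by blast
    have Hsi: "z \<in> ?Hs ! i \<and> closed (?Hs ! i) \<and> convex (?Hs ! i)" if i: "i < card (I k)" for i
    proof -
      have "rev xs ! i \<in> I k" using i lxs setxs by (metis length_rev nth_mem set_rev)
      moreover have "?Hs ! i = tgss_H \<delta> \<eta> Fadj F yd x lam (rev xs ! i)"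
        using Hs i lxs by simp
      ultimately show ?thesis using zin by (simp add: tgss_H_def stripe_closed stripe_convex)
    qed
    have Sprops: "closed (\<Inter>i\<le>j. ?Hs ! i) \<and> convex (\<Inter>i\<le>j. ?Hs ! i) \<and> z \<in> (\<Inter>i\<le>j. ?Hs ! i)"
      if j: "j < card (I k)" for j
      using Hsi j by (auto intro!: closed_INT convex_INT)
    have proj: "is_metric_proj (\<Inter>i\<le>j. ?Hs ! i) (?p j) (?p (Suc j))" if j: "j < card (I k)" for j
    proof -
      have "(\<Inter>i\<le>j. ?Hs ! i) \<noteq> {}" using Sprops[OF j] by blast
      then have "is_metric_proj (\<Inter>i\<le>j. ?Hs ! i) (?p j) (metric_proj (\<Inter>i\<le>j. ?Hs ! i) (?p j))"
        using Sprops[OF j] metric_proj_is by blast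
      then show ?thesis by simp
    qed
    have H0: "?Hs ! 0 = tgss_H \<delta> \<eta> Fadj F yd x lam k"
    proof -
      have ne: "xs \<noteq> []" using setxs kI by auto
      have "rev xs ! 0 = last xs" using ne by (simp add: hd_rev[symmetric] hd_conv_nth)
      moreover have "last xs = k"
      proof (rule antisym)
        show "last xs \<le> k" using ne setxs Isub last_in_set by fastforce
        obtain i where i: "i < length xs" "xs ! i = k" using kI setxs by (metis in_set_conv_nth)
        have "xs ! i \<le> xs ! (length xs - 1)" using sxs i by (intro sorted_nth_mono) auto
        then show "k \<le> last xs" using i ne by (simp add: last_conv_nth)
      qed
      ultimately show ?thesis using Hs ne by simp
    qed
    have p1: "is_metric_proj (tgss_H \<delta> \<eta> Fadj F yd x lam k) ?zk (?p 1)"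
      using proj[OF cpos] H0 by simp
    have step1: "(norm (z - ?p 1))\<^sup>2 + (norm (?zk - ?p 1))\<^sup>2 \<le> (norm (z - ?zk))\<^sup>2"
      by (rule proj_ineq[OF p1 _ zin[OF kI]]) (simp add: tgss_H_def stripe_convex)
    have mono: "(norm (z - ?p j))\<^sup>2 \<le> (norm (z - ?p 1))\<^sup>2" if "1 \<le> j" "j \<le> card (I k)" for j
      using that
    proof (induction j)
      case 0 then show ?case by simp
    next
      case (Suc j)
      show ?case
      proof (cases "j = 0")
        case True then show ?thesis by simp
      next
        case False
        then have j: "j < card (I k)" "1 \<le> j" using Suc by auto
        have "(norm (z - ?p (Suc j)))\<^sup>2 + (norm (?p j - ?p (Suc j)))\<^sup>2 \<le> (norm (z - ?p j))\<^sup>2"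
          using proj_ineq[OF proj[OF j(1)]] Sprops[OF j(1)] by blast
        then have "(norm (z - ?p (Suc j)))\<^sup>2 \<le> (norm (z - ?p j))\<^sup>2"
          by (smt (verit) zero_le_power2)
        then show ?thesis using Suc j by simp
      qed
    qed
    have xk: "x (Suc k) = ?p (card (I k))" using x_step by simp
    have last: "(norm (z - x (Suc k)))\<^sup>2 \<le> (norm (z - ?p 1))\<^sup>2"
      using mono[of "card (I k)"] cpos xk by simp
    have p1in: "?p 1 \<in> stripe ?u ?al ?xi" using p1 unfolding is_metric_proj_def tgss_H_def by simp
    then have "inner ?u (?p 1) \<le> ?al + ?xi" unfolding stripe_def by auto
    then have ge: "(norm ?r)\<^sup>2 - ?xi \<le> inner ?u (?zk - ?p 1)" using al by (simp add: inner_diff_right)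
    also have "\<dots> \<le> norm ?u * norm (?zk - ?p 1)" by (rule norm_cauchy_schwarz)
    finally have cs: "(norm ?r)\<^sup>2 - ?xi \<le> norm ?u * norm (?zk - ?p 1)" .
    have u0: "?u \<noteq> 0" using cs dpos by auto
    have nu: "norm ?u > 0" using u0 by simp
    have dle: "((norm ?r)\<^sup>2 - ?xi) / norm ?u \<le> norm (?zk - ?p 1)"
      using cs nu by (simp add: divide_le_eq mult.commute)
    have "(((norm ?r)\<^sup>2 - ?xi) / norm ?u)\<^sup>2 \<le> (norm (?zk - ?p 1))\<^sup>2"
      using dle dpos nu by (intro power_mono) auto
    then have fin_ineq: "(norm (z - x (Suc k)))\<^sup>2 \<le> (norm (z - ?zk))\<^sup>2 - (((norm ?r)\<^sup>2 - ?xi) / norm ?u)\<^sup>2"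
      using last step1 by linarith
    show ?thesis using u0 proj fin_ineq eqd by simp
  qed
  show ?thesis using part1 part2 by blast
qed

end
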